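(* In the setting described in the context, the discrete contact force density $\lambda^h=(\lambda^h_1,\lambda^h_2)\in Q^h$ satisfies $$\lambda^h_1(p)\ge 0\quad\text{and}\quad \lambda^h_2(p)=0\qquad\forall p\in\mathcal{V}_h^C\cup\mathcal{M}_h^C.$$
   Context: Let $\Omega\subset\mathbb{R}^2$ be a bounded polygonal Lipschitz domain with boundary partitioned into relatively open, pairwise disjoint parts $\Gamma_D,\Gamma_N,\Gamma_C$, $\mathrm{meas}(\Gamma_D)>0$, $\overline{\Gamma_C}\subset\partial\Omega\setminus\overline{\Gamma_D}$, outward unit normal on $\Gamma_C$ equal to $e_1=(1,0)$. Let $\sigma(v)=\chi\,\mathrm{tr}(\epsilon(v))I+2\mu\epsilon(v)$ ($\chi,\mu>0$, $\epsilon(v)=\frac12(\nabla v+\nabla v^T)$), $a(w,v)=\int_\Omega\sigma(w):\epsilon(v)\,dx$, $L(v)=\int_\Omega f\cdot v\,dx+\int_{\Gamma_N}g\cdot v\,ds$ with $f\in[L^2(\Omega)]^2$, $g\in[L^2(\Gamma_N)]^2$. Let $\mathcal{T}_h$ be a regular triangulation of $\Omega$ (each of $\Gamma_D,\Gamma_N,\Gamma_C$ a union of mesh edges). $\mathcal{V}_h$ and $\mathcal{M}_h$ are the sets of vertices and edge midpoints; $\mathcal{V}_h^C$ = vertices in $\overline{\Gamma_C}$, $\mathcal{M}_h^C$ = midpoints of edges on $\Gamma_C$; $\mathcal{V}_h^D,\mathcal{M}_h^D$ analogously for $\Gamma_D$; $\mathcal{V}_h^o=\mathcal{V}_h\setminus\mathcal{V}_h^D$,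 $\mathcal{M}_h^o=\mathcal{M}_h\setminus\mathcal{M}_h^D$. $V^h=\{v\in[C(\overline\Omega)]^2: v|_T\in[P_2(T)]^2\ \forall T\in\mathcal{T}_h,\ v=0\text{ on }\Gamma_D\}$, with scalar quadratic Lagrange nodal basis $\psi_z$, $z\in\mathcal{V}_h^o\cup\mathcal{M}_h^o$. $\mathcal{K}^h=\{v^h=(v^h_1,v^h_2)\in V^h: v^h_1(z)\le0\ \forall z\in\mathcal{V}_h^C\cup\mathcal{M}_h^C\}$ and $u^h\in\mathcal{K}^h$ solves $a(u^h,v^h-u^h)\ge L(v^h-u^h)$ for all $v^h\in\mathcal{K}^h$. Split each edge of $\Gamma_C$ at its midpoint into two halves; $Q^h$ is the space of continuous $\mathbb{R}^2$-valued functions on $\overline{\Gamma_C}$ that are affine on each half, and $\phi_z$ ($z\in\mathcal{V}_h^C\cup\mathcal{M}_h^C$) are the scalar continuous piecewise affine nodal basis functions on this subdivision ($\phi_z(p)=\delta_{zp}$). For a node $z$, $\omega_z$ is the union of elements sharing $z$ and $\gamma_{z,C}=\partial\omega_z\cap\Gamma_C$. Define $\pi_h:Q^h\to V^h$ by $\pi_h v=\sum_{z\in\mathcal{V}_h^C\cup\mathcal{M}_h^C}\sum_{i=1}^2 v_i(z)\psi_z e_i$, the inner product $\langle w,v\rangle_h=\sum_{z\in\mathcal{V}_h^C\cup\mathcal{M}_h^C}w(z)\cdot v(z)\int_{\gamma_{z,C}}\phi_z\,ds$ on $Q^h$, and the discrete contact force density $\lambda^h\in Q^h$ by $\langle\lambda^h,v^h\rangle_h=L(\pi_hv^h)-a(u^h,\pi_hv^h)$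 for all $v^h\in Q^h$. *)

theory Defs
  imports "HOL-Analysis.Analysis"
begin

type_synonym pt = "real^2"

text \<open>A triangle is given by its set of three (affinely independent) vertices;
  the element itself is its convex hull. A mesh is a finite set of triangles.\<close>

definition mesh_edges :: "pt set set \<Rightarrow> pt set set" where
  "mesh_edges Th = {e. \<exists>T\<in>Th. e \<subseteq> T \<and> card e = 2}"

definition mesh_vertices :: "pt set set \<Rightarrow> pt set" where
  "mesh_vertices Th = \<Union>Th"

definition edge_midpoints :: "pt set set \<Rightarrow> pt set" where
  "edge_midpoints E = {midpoint a b | a b. {a, b} \<in> E \<and> a \<noteq> b}"

definition mesh_midpoints :: "pt set set \<Rightarrow> pt set" where
  "mesh_midpoints Th = edge_midpoints (mesh_edges Th)"

definition regular_triangulation :: "pt set set \<Rightarrow> pt set \<Rightarrow> bool" where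
  "regular_triangulation Th \<Omega> \<longleftrightarrow>
     finite Th \<and> Th \<noteq> {} \<and>
     (\<forall>T\<in>Th. card T = 3 \<and> \<not> collinear T) \<and>
     (\<forall>T\<in>Th. \<forall>T'\<in>Th. T \<noteq> T' \<longrightarrow> convex hull T \<inter> convex hull T' = convex hull (T \<inter> T')) \<and>
     closure \<Omega> = (\<Union>T\<in>Th. convex hull T)"

definition edge_union :: "pt set set \<Rightarrow> pt set" where
  "edge_union E = \<Union>{closed_segment a b | a b. {a, b} \<in> E}"

definition seg_integral :: "(pt \<Rightarrow> real) \<Rightarrow> pt set \<Rightarrow> real" where
  "seg_integral h e =
     (let p = (SOME p. e = {fst p, snd p}); a = fst p; b = snd p in
      dist a b * (LBINT t=0..1. h (a + t *\<^sub>R (b - a))))"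

definition bdry_integral :: "pt set set \<Rightarrow> pt set \<Rightarrow> (pt \<Rightarrow> real) \<Rightarrow> real" where
  "bdry_integral E S h = (\<Sum>e\<in>E. seg_integral (\<lambda>x. indicator S x * h x) e)"

definition L2_on_edge :: "(pt \<Rightarrow> pt) \<Rightarrow> pt set \<Rightarrow> bool" where
  "L2_on_edge g e \<longleftrightarrow> (\<forall>a b. e = {a, b} \<longrightarrow>
      (\<lambda>t. g (a + t *\<^sub>R (b - a))) \<in> borel_measurable (lebesgue_on {0..1}) \<and>
      set_integrable lebesgue {0..1::real} (\<lambda>t. (norm (g (a + t *\<^sub>R (b - a))))\<^sup>2))"

definition P2_on :: "pt set \<Rightarrow> (pt \<Rightarrow> real) \<Rightarrow> bool" where
  "P2_on S v \<longleftrightarrow> (\<exists>c0 c1 c2 c3 c4 c5::real. \<forall>x\<in>S.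
      v x = c0 + c1 * x$1 + c2 * x$2 + c3 * (x$1)\<^sup>2 + c4 * (x$1 * x$2) + c5 * (x$2)\<^sup>2)"

definition P1_on :: "pt set \<Rightarrow> (pt \<Rightarrow> real) \<Rightarrow> bool" where
  "P1_on S v \<longleftrightarrow> (\<exists>c0 c1 c2::real. \<forall>x\<in>S. v x = c0 + c1 * x$1 + c2 * x$2)"

definition Vh_scalar :: "pt set set \<Rightarrow> pt set \<Rightarrow> pt set \<Rightarrow> (pt \<Rightarrow> real) set" where
  "Vh_scalar Th \<Omega> GD = {v. continuous_on (closure \<Omega>) v \<and>
      (\<forall>T\<in>Th. P2_on (convex hull T) v) \<and> (\<forall>x\<in>closure GD. v x = 0)}"

definition Vh :: "pt set set \<Rightarrow> pt set \<Rightarrow> pt set \<Rightarrow> (pt \<Rightarrow> pt) set" where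
  "Vh Th \<Omega> GD = {v. continuous_on (closure \<Omega>) v \<and>
      (\<forall>T\<in>Th. \<forall>i. P2_on (convex hull T) (\<lambda>x. v x $ i)) \<and> (\<forall>x\<in>closure GD. v x = 0)}"

definition Kh :: "pt set set \<Rightarrow> pt set \<Rightarrow> pt set \<Rightarrow> pt set \<Rightarrow> (pt \<Rightarrow> pt) set" where
  "Kh Th \<Omega> GD CN = {v \<in> Vh Th \<Omega> GD. \<forall>z\<in>CN. v z $ 1 \<le> 0}"

definition half_edges :: "pt set set \<Rightarrow> pt set set" where
  "half_edges EC = {closed_segment a (midpoint a b) | a b. {a, b} \<in> EC}"

definition Qh_scalar :: "pt set set \<Rightarrow> pt set \<Rightarrow> (pt \<Rightarrow> real) set" where
  "Qh_scalar EC GC = {v. continuous_on (closure GC) v \<and>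
      (\<forall>H\<in>half_edges EC. P1_on H v) \<and> (\<forall>x. x \<notin> closure GC \<longrightarrow> v x = 0)}"

definition Qh :: "pt set set \<Rightarrow> pt set \<Rightarrow> (pt \<Rightarrow> pt) set" where
  "Qh EC GC = {v. continuous_on (closure GC) v \<and>
      (\<forall>H\<in>half_edges EC. \<forall>i. P1_on H (\<lambda>x. v x $ i)) \<and> (\<forall>x. x \<notin> closure GC \<longrightarrow> v x = 0)}"

definition grad :: "(pt \<Rightarrow> pt) \<Rightarrow> pt \<Rightarrow> real^2^2" where
  "grad v x = matrix (frechet_derivative v (at x))"

definition strain :: "(pt \<Rightarrow> pt) \<Rightarrow> pt \<Rightarrow> real^2^2" where
  "strain v x = (1/2) *\<^sub>R (grad v x + transpose (grad v x))"

definition stress :: "real \<Rightarrow> real \<Rightarrow> (pt \<Rightarrow> pt) \<Rightarrow> pt \<Rightarrow> real^2^2" where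
  "stress chi \<mu> v x = (chi * trace (strain v x)) *\<^sub>R mat 1 + (2 * \<mu>) *\<^sub>R strain v x"

definition ddot :: "real^2^2 \<Rightarrow> real^2^2 \<Rightarrow> real" where
  "ddot A B = (\<Sum>i\<in>UNIV. \<Sum>j\<in>UNIV. A$i$j * B$i$j)"

definition bil_a :: "real \<Rightarrow> real \<Rightarrow> pt set \<Rightarrow> (pt \<Rightarrow> pt) \<Rightarrow> (pt \<Rightarrow> pt) \<Rightarrow> real" where
  "bil_a chi \<mu> \<Omega> w v = (LINT x:\<Omega>|lebesgue. ddot (stress chi \<mu> w x) (strain v x))"

definition lin_L :: "pt set \<Rightarrow> (pt \<Rightarrow> pt) \<Rightarrow> pt set set \<Rightarrow> pt set \<Rightarrow> (pt \<Rightarrow> pt) \<Rightarrow> (pt \<Rightarrow> pt) \<Rightarrow> real" where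
  "lin_L \<Omega> f EN GN g v = (LINT x:\<Omega>|lebesgue. f x \<bullet> v x) + bdry_integral EN GN (\<lambda>x. g x \<bullet> v x)"

definition patch :: "pt set set \<Rightarrow> pt \<Rightarrow> pt set" where
  "patch Th z = \<Union>{convex hull T | T. T \<in> Th \<and> z \<in> convex hull T}"

definition ip_h :: "pt set set \<Rightarrow> pt set set \<Rightarrow> pt set \<Rightarrow> pt set \<Rightarrow> (pt \<Rightarrow> pt \<Rightarrow> real)
                    \<Rightarrow> (pt \<Rightarrow> pt) \<Rightarrow> (pt \<Rightarrow> pt) \<Rightarrow> real" where
  "ip_h Th EC GC CN \<phi> w v =
     (\<Sum>z\<in>CN. (w z \<bullet> v z) * bdry_integral EC (frontier (patch Th z) \<inter> GC) (\<phi> z))"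

definition pi_h :: "pt set \<Rightarrow> (pt \<Rightarrow> pt \<Rightarrow> real) \<Rightarrow> (pt \<Rightarrow> pt) \<Rightarrow> (pt \<Rightarrow> pt)" where
  "pi_h CN \<psi> v = (\<lambda>x. \<Sum>z\<in>CN. \<Sum>i\<in>UNIV. (v z $ i * \<psi> z x) *\<^sub>R axis i 1)"

end

theory Submission
  imports Defs
begin


lemma lbint01_nonneg:
  fixes F :: "real \<Rightarrow> real"
  assumes "\<forall>t\<in>{0<..<1}. 0 \<le> F t"
  shows "(LBINT t=0..1. F t) \<ge> 0"
  unfolding interval_lebesgue_integral_def set_lebesgue_integral_def
  using assms by (auto intro!: integral_nonneg_AE simp: einterval_def indicator_def)

lemma lbint01_pos:
  fixes F :: "real \<Rightarrow> real"
  assumes meas: "F \<in> borel_measurable borel"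
    and bnd: "\<forall>t\<in>{0<..<1}. 0 \<le> F t \<and> F t \<le> B"
    and cd: "0 \<le> c" "c < d" "d \<le> 1" and eps: "\<epsilon> > 0"
    and low: "\<forall>t\<in>{c<..<d}. \<epsilon> \<le> F t"
  shows "(LBINT t=0..1. F t) > 0"
proof -
  have e01: "einterval 0 1 = {0<..<1::real}" by (auto simp: einterval_def)
  have int: "integrable lborel (\<lambda>t. indicator {0<..<1::real} t *\<^sub>R F t)"
    apply (rule integrableI_bounded_set_indicator[where B=B])
    using meas bnd by (auto)
  have int2: "integrable lborel (\<lambda>t. indicator {c<..<d::real} t *\<^sub>R \<epsilon>)"
    by (rule integrableI_bounded_set_indicator[where B=\<epsilon>]) (use cd in \<open>auto simp: eps less_imp_le\<close>)
  have "0 < \<epsilon> * (d - c)" using cd eps by simp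
  also have "\<epsilon> * (d - c) = integral\<^sup>L lborel (\<lambda>t. indicator {c<..<d::real} t *\<^sub>R \<epsilon>)"
    using cd by (simp add: mult.commute)
  also have "\<dots> \<le> integral\<^sup>L lborel (\<lambda>t. indicator {0<..<1::real} t *\<^sub>R F t)"
    apply (rule integral_mono[OF int2 int])
    using low bnd cd by (auto simp: indicator_def)
  finally show ?thesis
    by (simp add: interval_lebesgue_integral_def set_lebesgue_integral_def e01)
qed



lemma seg_integral_cases:
  assumes "a \<noteq> b"
  shows "seg_integral h {a,b} = dist a b * (LBINT t=0..1. h (a + t *\<^sub>R (b-a))) \<or>
         seg_integral h {a,b} = dist a b * (LBINT t=0..1. h (b + t *\<^sub>R (a-b)))"
proof -
  obtain a' b' where ab': "(SOME p. {a,b} = {fst p, snd p}) = (a',b')" by (rule prod.exhaust)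
  have "{a,b} = {fst (a',b'), snd (a',b')}"
    unfolding ab'[symmetric] by (rule someI[where x="(a,b)"]) simp
  hence "(a' = a \<and> b' = b) \<or> (a' = b \<and> b' = a)" by (simp add: doubleton_eq_iff) blast
  moreover have "seg_integral h {a,b} = dist a' b' * (LBINT t=0..1. h (a' + t *\<^sub>R (b'-a')))"
    unfolding seg_integral_def Let_def ab' by simp
  ultimately show ?thesis by (elim disjE conjE) (simp_all add: dist_commute)
qed


lemma seg_pt_in: "0 \<le> t \<Longrightarrow> t \<le> 1 \<Longrightarrow> a + t *\<^sub>R (b - a) \<in> closed_segment a b"
  unfolding in_segment by (rule exI[of _ t]) (auto simp: algebra_simps)

lemma seg_integral_nonneg:
  assumes "a \<noteq> b" and "\<forall>x\<in>closed_segment a b. 0 \<le> h x"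
  shows "seg_integral h {a,b} \<ge> 0"
proof -
  have 1: "(LBINT t=0..1. h (a + t *\<^sub>R (b-a))) \<ge> 0"
    by (rule lbint01_nonneg) (use assms seg_pt_in[of _ a b] in \<open>auto simp: closed_segment_commute\<close>)
  have 2: "(LBINT t=0..1. h (b + t *\<^sub>R (a-b))) \<ge> 0"
    by (rule lbint01_nonneg) (use assms seg_pt_in[of _ b a] in \<open>auto simp: closed_segment_commute\<close>)
  have "dist a b \<ge> 0" by simp
  thus ?thesis using seg_integral_cases[OF assms(1), of h] 1 2 by (metis mult_nonneg_nonneg)
qed

lemma seg_integral_pos:
  assumes ab: "a \<noteq> b" and meas: "h \<in> borel_measurable borel"
    and bnd: "\<forall>x\<in>closed_segment a b. 0 \<le> h x \<and> h x \<le> B"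
    and cd: "0 \<le> c" "c < d" "d \<le> 1" and eps: "\<epsilon> > 0"
    and low: "\<forall>t\<in>{c<..<d}. \<epsilon> \<le> h (a + t *\<^sub>R (b - a))"
  shows "seg_integral h {a,b} > 0"
proof -
  have m1: "(\<lambda>t. h (a + t *\<^sub>R (b-a))) \<in> borel_measurable borel"
    by (intro measurable_compose[OF _ meas]) (intro borel_measurable_continuous_onI continuous_intros)
  have m2: "(\<lambda>t. h (b + t *\<^sub>R (a-b))) \<in> borel_measurable borel"
    by (intro measurable_compose[OF _ meas]) (intro borel_measurable_continuous_onI continuous_intros)
  have 1: "(LBINT t=0..1. h (a + t *\<^sub>R (b-a))) > 0"
    by (rule lbint01_pos[OF m1 _ cd eps low, where B=B]) (use bnd seg_pt_in[of _ a b] in \<open>auto simp: closed_segment_commute\<close>)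
  have eq: "b + t *\<^sub>R (a-b) = a + (1-t) *\<^sub>R (b-a)" for t
    by (simp add: algebra_simps)
  have low2: "\<forall>t\<in>{1-d<..<1-c}. \<epsilon> \<le> h (b + t *\<^sub>R (a-b))"
  proof
    fix t assume "t \<in> {1-d<..<1-c}"
    hence "1 - t \<in> {c<..<d}" by auto
    thus "\<epsilon> \<le> h (b + t *\<^sub>R (a-b))" using low unfolding eq by blast
  qed
  have 2: "(LBINT t=0..1. h (b + t *\<^sub>R (a-b))) > 0"
    apply (rule lbint01_pos[OF m2 _ _ _ _ eps low2, where B=B])
    using bnd seg_pt_in[of _ b a] cd
    by (auto simp: closed_segment_commute)
  have "dist a b > 0" using ab by simp
  thus ?thesis using seg_integral_cases[OF ab, of h] 1 2 by (metis mult_pos_pos)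
qed



lemma comp1_seg:
  fixes a b x :: pt
  assumes "x \<in> closed_segment a b"
  shows "\<exists>u. 0 \<le> u \<and> u \<le> 1 \<and> x $ 1 = (1-u) * a$1 + u * b$1"
  using assms unfolding in_segment by auto

lemma H1:
  fixes b c x :: pt
  assumes "c $ 1 < b $ 1" "x \<in> closed_segment b c" "x $ 1 = b $ 1"
  shows "x = b"
proof -
  obtain u where u: "0 \<le> u" "u \<le> 1" "x = (1-u) *\<^sub>R b + u *\<^sub>R c"
    using assms(2) unfolding in_segment by auto
  hence "x $ 1 = (1-u) * b$1 + u * c$1" by simp
  hence "x $ 1 = b$1 + u * (c$1 - b$1)" by (simp add: algebra_simps)
  hence "u * (c$1 - b$1) = 0" using assms(3) by simp
  hence "u = 0" using assms(1) by simp
  thus ?thesis using u by simp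
qed

lemma seg_comp1:
  fixes a b x :: pt
  assumes "a $ 1 = b $ 1" "x \<in> closed_segment a b"
  shows "x $ 1 = a $ 1"
proof -
  obtain u where u: "0 \<le> u" "u \<le> 1" "x = (1-u) *\<^sub>R a + u *\<^sub>R b"
    using assms(2) unfolding in_segment by auto
  hence "x $ 1 = (1-u) * a$1 + u * b$1" by simp
  thus ?thesis using assms(1) by (simp add: algebra_simps)
qed

lemma hull_le:
  fixes T :: "pt set"
  assumes "\<forall>y\<in>T. y $ 1 \<le> k"
  shows "\<forall>y\<in>convex hull T. y $ 1 \<le> k"
proof -
  have cv: "convex {y. inner (axis 1 1) y \<le> k}" by (rule convex_halfspace_le)
  have "convex hull T \<subseteq> {y. inner (axis 1 1) y \<le> k}"
    by (rule hull_minimal[where S=convex, OF _ cv]) (use assms in \<open>auto simp: inner_axis'\<close>)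
  thus ?thesis by (auto simp: inner_axis')
qed

lemma card3_obtain:
  assumes "card T = 3" "a \<in> T" "b \<in> T" "a \<noteq> b"
  obtains c where "T = {a,b,c}" "c \<noteq> a" "c \<noteq> b"
proof -
  have fin: "finite T" using assms(1) card.infinite by fastforce
  have "card (T - {a,b}) = 1" using assms fin by (simp add: card_Diff_subset)
  then obtain c where c: "T - {a,b} = {c}" by (auto simp: card_Suc_eq)
  hence "T = {a,b,c}" using assms by auto
  thus ?thesis using that c by auto
qed

lemma G:
  fixes Th EC :: "pt set set"
  assumes NC: "\<forall>e\<in>EC. \<forall>T\<in>Th. e \<subseteq> T \<longrightarrow>
           (\<forall>a\<in>e. \<forall>b\<in>e. a $ 1 = b $ 1) \<and> (\<forall>a\<in>e. \<forall>c\<in>T - e. c $ 1 < a $ 1)"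
    and CF: "\<forall>T\<in>Th. \<forall>T'\<in>Th. T \<noteq> T' \<longrightarrow> convex hull T \<inter> convex hull T' = convex hull (T \<inter> T')"
    and C3: "\<forall>T\<in>Th. card T = 3"
    and e: "{a,b} \<in> EC" "a \<noteq> b" "T \<in> Th" "{a,b} \<subseteq> T"
    and x: "x \<in> open_segment a b" and T': "T' \<in> Th" "x \<in> convex hull T'"
  shows "{a,b} \<subseteq> T'"
proof -
  obtain c where c: "T = {a,b,c}" "c \<noteq> a" "c \<noteq> b"
    using card3_obtain[of T a b] C3 e by auto
  have ab1: "a $ 1 = b $ 1" using NC e by auto
  have c1: "c $ 1 < a $ 1" using NC e c by auto
  have xs: "x \<in> closed_segment a b" using x by (simp add: open_segment_def)
  have xab: "x \<noteq> a" "x \<noteq> b" using x by (auto simp: open_segment_def)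
  have x1: "x $ 1 = a $ 1" using seg_comp1[OF ab1 xs] .
  show ?thesis
  proof (cases "T' = T")
    case True thus ?thesis using e by simp
  next
    case False
    have "x \<in> convex hull T"
      using xs hull_mono[OF e(4)] by (auto simp: segment_convex_hull)
    hence xI: "x \<in> convex hull (T \<inter> T')" using CF e(3) T' False by blast
    have "a \<in> T'"
    proof (rule ccontr)
      assume "a \<notin> T'"
      hence "T \<inter> T' \<subseteq> {b,c}" using c by auto
      hence "x \<in> closed_segment b c" using xI hull_mono by (fastforce simp: segment_convex_hull)
      hence "x = b" using H1[of c b x] c1 ab1 x1 by simp
      thus False using xab by simp
    qed
    moreover have "b \<in> T'"
    proof (rule ccontr)
      assume "b \<notin> T'"
      hence "T \<inter> T' \<subseteq> {a,c}" using c by auto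
      hence "x \<in> closed_segment a c" using xI hull_mono by (fastforce simp: segment_convex_hull)
      hence "x = a" using H1[of c a x] c1 ab1 x1 by simp
      thus False using xab by simp
    qed
    ultimately show ?thesis by simp
  qed
qed



lemma seg_lt:
  fixes a b y :: pt
  assumes "a $ 1 < k" "b $ 1 < k" "y \<in> closed_segment a b"
  shows "y $ 1 < k"
proof -
  obtain u where u: "0 \<le> u" "u \<le> 1" "y = (1-u) *\<^sub>R a + u *\<^sub>R b"
    using assms(3) unfolding in_segment by auto
  hence "y $ 1 = (1-u) * a$1 + u * b$1" by simp
  also have "\<dots> < (1-u) * k + u * k"
  proof (cases "u = 0")
    case True thus ?thesis using assms by simp
  next
    case False
    have "(1-u) * a$1 \<le> (1-u) * k" using u assms by (intro mult_left_mono) auto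
    moreover have "u * b$1 < u * k" using u False assms by simp
    ultimately show ?thesis by simp
  qed
  finally show ?thesis by (simp add: algebra_simps)
qed

lemma G2:
  fixes Th EC :: "pt set set"
  assumes NC: "\<forall>e\<in>EC. \<forall>T\<in>Th. e \<subseteq> T \<longrightarrow>
           (\<forall>a\<in>e. \<forall>b\<in>e. a $ 1 = b $ 1) \<and> (\<forall>a\<in>e. \<forall>c\<in>T - e. c $ 1 < a $ 1)"
    and CF: "\<forall>T\<in>Th. \<forall>T'\<in>Th. T \<noteq> T' \<longrightarrow> convex hull T \<inter> convex hull T' = convex hull (T \<inter> T')"
    and C3: "\<forall>T\<in>Th. card T = 3"
    and e: "{a,b} \<in> EC" "a \<noteq> b" "T \<in> Th" "{a,b} \<subseteq> T"
    and y: "y \<in> open_segment a b"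
    and e': "{a',b'} \<in> EC" "a' \<noteq> b'" "T' \<in> Th" "{a',b'} \<subseteq> T'"
    and y': "y \<in> closed_segment a' b'"
  shows "{a',b'} = {a,b}"
proof -
  have "closed_segment a' b' \<subseteq> convex hull T'"
    using hull_mono[OF e'(4)] by (simp add: segment_convex_hull)
  hence "y \<in> convex hull T'" using y' by blast
  hence abT': "{a,b} \<subseteq> T'" using G[OF NC CF C3 e y e'(3)] by simp
  have ab1: "a $ 1 = b $ 1" using NC e by auto
  have ys: "y \<in> closed_segment a b" using y by (simp add: open_segment_def)
  have yab: "y \<noteq> a" "y \<noteq> b" using y by (auto simp: open_segment_def)
  have y1: "y $ 1 = a $ 1" using seg_comp1[OF ab1 ys] .
  have nc: "(\<forall>a0\<in>{a,b}. \<forall>b0\<in>{a,b}. a0 $ 1 = b0 $ 1) \<and> (\<forall>a0\<in>{a,b}. \<forall>c\<in>T' - {a,b}. c $ 1 < a0 $ 1)"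
    using bspec[OF bspec[OF NC e(1)] e'(3)] abT' by (rule mp)
  have out: "c $ 1 < a $ 1" if "c \<in> T'" "c \<notin> {a,b}" for c
  proof -
    have c: "c \<in> T' - {a,b}" using that by simp
    have a: "a \<in> {a,b}" by simp
    show ?thesis using bspec[OF bspec[OF conjunct2[OF nc] a] c] .
  qed
  have a'in: "a' \<in> {a,b}"
  proof (rule ccontr)
    assume na: "a' \<notin> {a,b}"
    hence a'1: "a' $ 1 < a $ 1" using out e'(4) by simp
    show False
    proof (cases "b' \<in> {a,b}")
      case True
      hence "b' $ 1 = a $ 1" using ab1 by auto
      hence "y = b'" using H1[of a' b' y] a'1 y1 y' by (simp add: closed_segment_commute)
      thus False using True yab by auto
    next
      case False
      hence "b' $ 1 < a $ 1" using out e'(4) by simp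
      hence "y $ 1 < a $ 1" using seg_lt[OF a'1 _ y'] by simp
      thus False using y1 by simp
    qed
  qed
  have b'in: "b' \<in> {a,b}"
  proof (rule ccontr)
    assume na: "b' \<notin> {a,b}"
    hence b'1: "b' $ 1 < a $ 1" using out e'(4) by simp
    have "a' $ 1 = a $ 1" using a'in ab1 by auto
    hence "y = a'" using H1[of b' a' y] b'1 y1 y' by simp
    thus False using a'in yab by auto
  qed
  show ?thesis using a'in b'in e'(2) by auto
qed



lemma PF:
  fixes Th EC :: "pt set set"
  assumes NC: "\<forall>e\<in>EC. \<forall>T\<in>Th. e \<subseteq> T \<longrightarrow>
           (\<forall>a\<in>e. \<forall>b\<in>e. a $ 1 = b $ 1) \<and> (\<forall>a\<in>e. \<forall>c\<in>T - e. c $ 1 < a $ 1)"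
    and CF: "\<forall>T\<in>Th. \<forall>T'\<in>Th. T \<noteq> T' \<longrightarrow> convex hull T \<inter> convex hull T' = convex hull (T \<inter> T')"
    and C3: "\<forall>T\<in>Th. card T = 3" and fin: "finite Th"
    and e: "{a,b} \<in> EC" "a \<noteq> b" "T \<in> Th" "{a,b} \<subseteq> T"
    and x: "x \<in> open_segment a b" and p: "p \<in> convex hull T"
  shows "x \<in> frontier (patch Th p)"
proof -
  have xs: "x \<in> closed_segment a b" using x by (simp add: open_segment_def)
  have "x \<in> convex hull T"
    using xs hull_mono[OF e(4)] by (auto simp: segment_convex_hull)
  hence xP: "x \<in> patch Th p" unfolding patch_def using e(3) p by blast
  have ab1: "a $ 1 = b $ 1" using NC e by auto
  have x1: "x $ 1 = a $ 1" using seg_comp1[OF ab1 xs] .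
  have "x \<notin> interior (patch Th p)"
  proof
    assume "x \<in> interior (patch Th p)"
    then obtain r where r: "r > 0" "ball x r \<subseteq> patch Th p"
      by (auto simp: mem_interior)
    define D where "D = \<Union>{convex hull T' | T'. T' \<in> Th \<and> x \<notin> convex hull T'}"
    have finT: "finite T'" if "T' \<in> Th" for T'
      using C3 that card.infinite by fastforce
    have "closed D" unfolding D_def
    proof (rule closed_Union)
      show "finite {convex hull T' | T'. T' \<in> Th \<and> x \<notin> convex hull T'}"
        using fin by simp
      show "\<forall>S\<in>{convex hull T' | T'. T' \<in> Th \<and> x \<notin> convex hull T'}. closed S"
        using finT by (auto intro!: compact_imp_closed compact_convex_hull[OF finite_imp_compact])
    qed
    moreover have "x \<notin> D" unfolding D_def by auto
    ultimately have "open (- D)" "x \<in> - D" by auto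
    then obtain r2 where r2: "r2 > 0" "ball x r2 \<subseteq> - D"
      using open_contains_ball by blast
    define m where "m = min r r2 / 2"
    have m: "m > 0" "m < r" "m < r2" using r r2 by (auto simp: m_def)
    define w where "w = x + m *\<^sub>R axis 1 1"
    have dw: "dist x w = m" using m by (simp add: w_def dist_norm)
    hence "w \<in> patch Th p" using r m by auto
    then obtain T' where T': "T' \<in> Th" "w \<in> convex hull T'" unfolding patch_def by blast
    have "x \<in> convex hull T'"
    proof (rule ccontr)
      assume "x \<notin> convex hull T'"
      hence "w \<in> D" unfolding D_def using T' by blast
      moreover have "w \<in> ball x r2" using dw m by simp
      ultimately show False using r2 by auto
    qed
    hence abT': "{a,b} \<subseteq> T'" using G[OF NC CF C3 e x T'(1)] by simp
    have nc: "(\<forall>a0\<in>{a,b}. \<forall>b0\<in>{a,b}. a0 $ 1 = b0 $ 1) \<and> (\<forall>a0\<in>{a,b}. \<forall>c\<in>T' - {a,b}. c $ 1 < a0 $ 1)"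
      using bspec[OF bspec[OF NC e(1)] T'(1)] abT' by (rule mp)
    have "\<forall>y\<in>T'. y $ 1 \<le> a $ 1"
    proof
      fix y assume yT: "y \<in> T'"
      show "y $ 1 \<le> a $ 1"
      proof (cases "y \<in> {a,b}")
        case True thus ?thesis using ab1 by auto
      next
        case False
        hence "y \<in> T' - {a,b}" using yT by simp
        thus ?thesis using bspec[OF bspec[OF conjunct2[OF nc]], of a y] by simp
      qed
    qed
    hence "w $ 1 \<le> a $ 1" using hull_le T'(2) by blast
    moreover have "w $ 1 = x $ 1 + m" by (simp add: w_def)
    ultimately show False using m x1 by simp
  qed
  moreover have "x \<in> closure (patch Th p)" using xP closure_subset by blast
  ultimately show ?thesis by (simp add: frontier_def)
qed



lemma distpar: "dist (a + s *\<^sub>R (b - a)) (a + t *\<^sub>R (b - a)) = \<bar>s - t\<bar> * norm (b - a)"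
proof -
  have "(a + s *\<^sub>R (b - a)) - (a + t *\<^sub>R (b - a)) = (s - t) *\<^sub>R (b - a)"
    by (simp add: algebra_simps)
  thus ?thesis by (simp add: dist_norm)
qed

lemma seg_param: "z \<in> closed_segment a b \<Longrightarrow> \<exists>u. 0 \<le> u \<and> u \<le> 1 \<and> z = a + u *\<^sub>R (b - a)"
  unfolding in_segment by (auto simp: algebra_simps)

lemma seg_in_edge_union: "{a,b} \<in> E \<Longrightarrow> closed_segment a b \<subseteq> edge_union E"
  unfolding edge_union_def by blast

lemma GCI:
  fixes Th EC :: "pt set set" and GC Fr U :: "pt set"
  assumes NC: "\<forall>e\<in>EC. \<forall>T\<in>Th. e \<subseteq> T \<longrightarrow>
           (\<forall>a\<in>e. \<forall>b\<in>e. a $ 1 = b $ 1) \<and> (\<forall>a\<in>e. \<forall>c\<in>T - e. c $ 1 < a $ 1)"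
    and CF: "\<forall>T\<in>Th. \<forall>T'\<in>Th. T \<noteq> T' \<longrightarrow> convex hull T \<inter> convex hull T' = convex hull (T \<inter> T')"
    and C3: "\<forall>T\<in>Th. card T = 3"
    and finEC: "finite EC"
    and EC_ok: "\<forall>e\<in>EC. \<exists>a' b' T'. e = {a',b'} \<and> a' \<noteq> b' \<and> T' \<in> Th \<and> e \<subseteq> T'"
    and cl: "closure GC = edge_union EC" and GCU: "GC = Fr \<inter> U" and oU: "open U"
    and sep: "closure GC \<subseteq> Fr"
    and e: "{a,b} \<in> EC" "a \<noteq> b" "T \<in> Th" "{a,b} \<subseteq> T"
  shows "\<exists>c d. 1/16 \<le> c \<and> c < d \<and> d \<le> 7/16 \<and> (\<forall>t\<in>{c<..<d}. a + t *\<^sub>R (b-a) \<in> GC)"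
proof -
  define y where "y = a + (1/4) *\<^sub>R (b - a)"
  have y: "y \<in> open_segment a b"
    unfolding in_segment using e(2) by (auto simp: y_def algebra_simps intro!: exI[of _ "1/4"])
  define F where "F = \<Union>{closed_segment a' b' | a' b'. {a',b'} \<in> EC \<and> {a',b'} \<noteq> {a,b}}"
  have finU: "finite (\<Union>EC)"
    using finEC EC_ok by (intro finite_Union) (auto)
  have "{closed_segment a' b' | a' b'. {a',b'} \<in> EC \<and> {a',b'} \<noteq> {a,b}}
        \<subseteq> (\<lambda>(a',b'). closed_segment a' b') ` (\<Union>EC \<times> \<Union>EC)"
    by (auto simp: image_iff)
  hence fin: "finite {closed_segment a' b' | a' b'. {a',b'} \<in> EC \<and> {a',b'} \<noteq> {a,b}}"
    by (rule finite_subset) (use finU in simp)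
  have "closed F" unfolding F_def by (rule closed_Union[OF fin]) auto
  moreover have "y \<notin> F"
  proof
    assume "y \<in> F"
    then obtain a' b' where ab': "{a',b'} \<in> EC" "{a',b'} \<noteq> {a,b}" "y \<in> closed_segment a' b'"
      unfolding F_def by blast
    obtain a'' b'' T' where T': "{a',b'} = {a'',b''}" "a'' \<noteq> b''" "T' \<in> Th" "{a',b'} \<subseteq> T'"
      using bspec[OF EC_ok ab'(1)] by meson
    have "a' \<noteq> b'" using T'(1,2) by (auto simp: doubleton_eq_iff)
    hence "{a',b'} = {a,b}" using G2[OF NC CF C3 e y ab'(1) _ T'(3,4) ab'(3)] by simp
    thus False using ab'(2) by simp
  qed
  ultimately have "open (- F)" "y \<in> - F" by auto
  then obtain r where r: "r > 0" "ball y r \<subseteq> - F" using open_contains_ball by blast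
  have nba: "norm (b - a) > 0" using e(2) by simp
  define r0 where "r0 = min r (norm (b - a) / 8)"
  have r0: "r0 > 0" "r0 \<le> r" "r0 \<le> norm (b - a) / 8" using r nba by (auto simp: r0_def)
  have "y \<in> closure GC"
    using y seg_in_edge_union[OF e(1)] cl by (auto simp: open_segment_def)
  then obtain z where z: "z \<in> GC" "dist z y < r0" using closure_approachable r0(1) by blast
  have "z \<in> edge_union EC" using z(1) cl closure_subset by blast
  then obtain a' b' where ab': "{a',b'} \<in> EC" "z \<in> closed_segment a' b'"
    unfolding edge_union_def by blast
  have "{a',b'} = {a,b}"
  proof (rule ccontr)
    assume "{a',b'} \<noteq> {a,b}"
    hence "z \<in> F" unfolding F_def using ab' by blast
    moreover have "z \<in> ball y r" using z(2) r0 by (simp add: dist_commute)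
    ultimately show False using r by blast
  qed
  hence segeq: "closed_segment a' b' = closed_segment a b"
    by (auto simp: doubleton_eq_iff closed_segment_commute)
  have "z \<in> closed_segment a b" using ab'(2) unfolding segeq .
  then obtain u where u: "0 \<le> u" "u \<le> 1" "z = a + u *\<^sub>R (b - a)" using seg_param by blast
  have "dist z y = \<bar>u - 1/4\<bar> * norm (b - a)" unfolding u(3) y_def by (rule distpar)
  hence "\<bar>u - 1/4\<bar> * norm (b - a) < norm (b - a) / 8" using z(2) r0 by simp
  hence "\<bar>u - 1/4\<bar> < 1/8" using nba by (simp add: field_simps)
  hence "u - 1/4 < 1/8 \<and> - (u - 1/4) < 1/8" by (simp only: abs_less_iff)
  hence u8: "1/8 < u" "u < 3/8" by linarith+
  have "z \<in> U" using z(1) GCU by simp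
  then obtain r' where r': "r' > 0" "ball z r' \<subseteq> U" using oU open_contains_ball by blast
  define \<delta> where "\<delta> = min (1/16) (r' / norm (b - a))"
  have \<delta>: "\<delta> > 0" "\<delta> \<le> 1/16" "\<delta> * norm (b - a) \<le> r'"
    using r' nba by (auto simp: \<delta>_def min_def field_simps)
  show ?thesis
  proof (intro exI conjI)
    show "1/16 \<le> u - \<delta>" "u - \<delta> < u + \<delta>" "u + \<delta> \<le> 7/16" using u8 \<delta> by auto
    show "\<forall>t\<in>{u - \<delta><..<u + \<delta>}. a + t *\<^sub>R (b - a) \<in> GC"
    proof
      fix t assume t: "t \<in> {u - \<delta><..<u + \<delta>}"
      have "dist z (a + t *\<^sub>R (b - a)) = \<bar>u - t\<bar> * norm (b - a)" unfolding u(3) by (rule distpar)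
      also have "\<dots> < \<delta> * norm (b - a)" using t nba by (intro mult_strict_right_mono) auto
      finally have "a + t *\<^sub>R (b - a) \<in> U" using r' \<delta> by auto
      moreover have "a + t *\<^sub>R (b - a) \<in> closed_segment a b"
        using t u8 \<delta> by (intro seg_pt_in) auto
      hence "a + t *\<^sub>R (b - a) \<in> Fr" using seg_in_edge_union[OF e(1)] cl sep by blast
      ultimately show "a + t *\<^sub>R (b - a) \<in> GC" using GCU by simp
    qed
  qed
qed



lemma P1_seg:
  assumes "P1_on (closed_segment a m) f" "0 \<le> s" "s \<le> 1"
  shows "f ((1-s) *\<^sub>R a + s *\<^sub>R m) = (1-s) * f a + s * f m"
proof -
  obtain c0 c1 c2 where c: "\<forall>x\<in>closed_segment a m. f x = c0 + c1 * x$1 + c2 * x$2"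
    using assms(1) unfolding P1_on_def by blast
  have in1: "(1-s) *\<^sub>R a + s *\<^sub>R m \<in> closed_segment a m"
    unfolding in_segment using assms by auto
  show ?thesis using c in1 ends_in_segment[of a m]
    by (simp add: algebra_simps)
qed

lemma half_param:
  assumes "P1_on (closed_segment a (midpoint a b)) f" "0 \<le> t" "t \<le> 1/2"
  shows "f (a + t *\<^sub>R (b - a)) = (1 - 2*t) * f a + (2*t) * f (midpoint a b)"
proof -
  have "a + t *\<^sub>R (b - a) = (1 - 2*t) *\<^sub>R a + (2*t) *\<^sub>R midpoint a b"
    by (simp add: midpoint_def vec_eq_iff algebra_simps)
  thus ?thesis using P1_seg[OF assms(1), of "2*t"] assms by simp
qed

lemma half_edge_in: "{a,b} \<in> EC \<Longrightarrow> closed_segment a (midpoint a b) \<in> half_edges EC"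
  unfolding half_edges_def by blast

lemma phi_bounds:
  assumes Q: "f \<in> Qh_scalar EC GC" and e: "{a,b} \<in> EC"
    and va: "f a \<in> {0,1}" and vb: "f b \<in> {0,1}" and vm: "f (midpoint a b) \<in> {0,1}"
    and x: "x \<in> closed_segment a b"
  shows "0 \<le> f x \<and> f x \<le> 1"
proof -
  have P: "\<forall>H\<in>half_edges EC. P1_on H f" using Q by (simp add: Qh_scalar_def)
  have Pa: "P1_on (closed_segment a (midpoint a b)) f" using P half_edge_in[OF e] by blast
  have e': "{b,a} \<in> EC" using e by (simp add: insert_commute)
  have Pb: "P1_on (closed_segment b (midpoint b a)) f" using P half_edge_in[OF e'] by blast
  obtain u where u: "0 \<le> u" "u \<le> 1" "x = a + u *\<^sub>R (b - a)" using seg_param[OF x] by blast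
  show ?thesis
  proof (cases "u \<le> 1/2")
    case True
    have "f x = (1 - 2*u) * f a + (2*u) * f (midpoint a b)"
      using half_param[OF Pa u(1) True] u(3) by simp
    thus ?thesis using va vm u True by auto
  next
    case False
    have xb: "x = b + (1 - u) *\<^sub>R (a - b)" using u(3) by (simp add: algebra_simps)
    have "f x = (1 - 2*(1-u)) * f b + (2*(1-u)) * f (midpoint b a)"
      using half_param[OF Pb, of "1-u"] u False xb by simp
    thus ?thesis using vb vm u False by (auto simp: midpoint_sym)
  qed
qed

lemma phi_low:
  assumes Q: "f \<in> Qh_scalar EC GC" and e: "{a,b} \<in> EC"
    and v: "(f a = 1 \<and> f (midpoint a b) = 0) \<or> (f a = 0 \<and> f (midpoint a b) = 1)"
    and t: "t \<in> {1/16<..<7/16}"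
  shows "1/8 \<le> f (a + t *\<^sub>R (b - a))"
proof -
  have P: "\<forall>H\<in>half_edges EC. P1_on H f" using Q by (simp add: Qh_scalar_def)
  have Pa: "P1_on (closed_segment a (midpoint a b)) f" using P half_edge_in[OF e] by blast
  have "f (a + t *\<^sub>R (b - a)) = (1 - 2*t) * f a + (2*t) * f (midpoint a b)"
    using half_param[OF Pa] t by simp
  thus ?thesis using v t by auto
qed



lemma axis_expand: "(\<Sum>i\<in>UNIV. (s * w $ i) *\<^sub>R axis i (1::real)) = s *\<^sub>R (w :: real^'n)"
  by (auto simp add: axis_def vec_eq_iff if_distrib sum.If_cases cong del: if_weak_cong)

lemma P2_lin:
  assumes "P2_on S f" "P2_on S g"
  shows "P2_on S (\<lambda>x. f x + c * g x)"
proof -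
  obtain a0 a1 a2 a3 a4 a5 where A: "\<forall>x\<in>S. f x = a0 + a1 * x$1 + a2 * x$2 + a3 * (x$1)\<^sup>2 + a4 * (x$1 * x$2) + a5 * (x$2)\<^sup>2"
    using assms(1) unfolding P2_on_def by blast
  obtain b0 b1 b2 b3 b4 b5 where B: "\<forall>x\<in>S. g x = b0 + b1 * x$1 + b2 * x$2 + b3 * (x$1)\<^sup>2 + b4 * (x$1 * x$2) + b5 * (x$2)\<^sup>2"
    using assms(2) unfolding P2_on_def by blast
  show ?thesis unfolding P2_on_def
    apply (rule exI[of _ "a0 + c*b0"], rule exI[of _ "a1 + c*b1"], rule exI[of _ "a2 + c*b2"],
           rule exI[of _ "a3 + c*b3"], rule exI[of _ "a4 + c*b4"], rule exI[of _ "a5 + c*b5"])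
    using A B by (simp add: algebra_simps)
qed

lemma P1_scale:
  assumes "P1_on S f"
  shows "P1_on S (\<lambda>x. c * f x)"
proof -
  obtain a0 a1 a2 where A: "\<forall>x\<in>S. f x = a0 + a1 * x$1 + a2 * x$2"
    using assms(1) unfolding P1_on_def by blast
  show ?thesis unfolding P1_on_def
    by (rule exI[of _ "c*a0"], rule exI[of _ "c*a1"], rule exI[of _ "c*a2"]) (use A in \<open>simp add: algebra_simps\<close>)
qed

lemma P1_zero: "P1_on S (\<lambda>x. 0)"
  unfolding P1_on_def by (rule exI[of _ 0], rule exI[of _ 0], rule exI[of _ 0]) simp



theorem lemma3p1:
  fixes \<Omega> GD GN GC :: "pt set"
    and Th ED EN EC :: "pt set set"
    and chi \<mu> :: real
    and f g :: "pt \<Rightarrow> pt"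
    and \<psi> \<phi> :: "pt \<Rightarrow> pt \<Rightarrow> real"
    and uh lam :: "pt \<Rightarrow> pt"
  defines "Vn \<equiv> mesh_vertices Th"
    and "Mn \<equiv> mesh_midpoints Th"
    and "VC \<equiv> mesh_vertices Th \<inter> closure GC"
    and "MC \<equiv> edge_midpoints EC"
    and "VD \<equiv> mesh_vertices Th \<inter> closure GD"
    and "MD \<equiv> edge_midpoints ED"
  assumes dom: "open \<Omega>" "connected \<Omega>" "bounded \<Omega>"
    and tri: "regular_triangulation Th \<Omega>"
    and edgesD: "ED \<subseteq> mesh_edges Th" "closure GD = edge_union ED"
    and edgesN: "EN \<subseteq> mesh_edges Th" "closure GN = edge_union EN"
    and edgesC: "EC \<subseteq> mesh_edges Th" "closure GC = edge_union EC"
    and parts_open: "openin (top_of_set (frontier \<Omega>)) GD"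
        "openin (top_of_set (frontier \<Omega>)) GN" "openin (top_of_set (frontier \<Omega>)) GC"
    and parts_disj: "GD \<inter> GN = {}" "GD \<inter> GC = {}" "GN \<inter> GC = {}"
    and parts_cover: "frontier \<Omega> = closure (GD \<union> GN \<union> GC)"
    and measD: "ED \<noteq> {}"
    and GC_sep: "closure GC \<subseteq> frontier \<Omega> - closure GD"
    and normal_C: "\<forall>e\<in>EC. \<forall>T\<in>Th. e \<subseteq> T \<longrightarrow>
           (\<forall>a\<in>e. \<forall>b\<in>e. a $ 1 = b $ 1) \<and> (\<forall>a\<in>e. \<forall>c\<in>T - e. c $ 1 < a $ 1)"
    and lame: "chi > 0" "\<mu> > 0"
    and f_L2: "f \<in> borel_measurable lebesgue" "set_integrable lebesgue \<Omega> (\<lambda>x. (norm (f x))\<^sup>2)"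
    and g_L2: "\<forall>e\<in>EN. L2_on_edge g e"
    and psi_basis: "\<forall>z\<in>(Vn - VD) \<union> (Mn - MD). \<psi> z \<in> Vh_scalar Th \<Omega> GD \<and>
                      (\<forall>p\<in>Vn \<union> Mn. \<psi> z p = (if p = z then 1 else 0))"
    and phi_basis: "\<forall>z\<in>VC \<union> MC. \<phi> z \<in> Qh_scalar EC GC \<and>
                      (\<forall>p\<in>VC \<union> MC. \<phi> z p = (if p = z then 1 else 0))"
    and uh_K: "uh \<in> Kh Th \<Omega> GD (VC \<union> MC)"
    and uh_VI: "\<forall>v\<in>Kh Th \<Omega> GD (VC \<union> MC).
                  bil_a chi \<mu> \<Omega> uh (\<lambda>x. v x - uh x) \<ge> lin_L \<Omega> f EN GN g (\<lambda>x. v x - uh x)"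
    and lam_Q: "lam \<in> Qh EC GC"
    and lam_def: "\<forall>v\<in>Qh EC GC.
                  ip_h Th EC GC (VC \<union> MC) \<phi> lam v
                    = lin_L \<Omega> f EN GN g (pi_h (VC \<union> MC) \<psi> v) - bil_a chi \<mu> \<Omega> uh (pi_h (VC \<union> MC) \<psi> v)"
  shows "\<forall>p\<in>VC \<union> MC. lam p $ 1 \<ge> 0 \<and> lam p $ 2 = 0"
proof -
  define CN where "CN = VC \<union> MC"
  have finTh: "finite Th" and C3: "\<forall>T\<in>Th. card T = 3"
    and CF: "\<forall>T\<in>Th. \<forall>T'\<in>Th. T \<noteq> T' \<longrightarrow> convex hull T \<inter> convex hull T' = convex hull (T \<inter> T')"
    using tri unfolding regular_triangulation_def by auto
  have finT: "finite T" if "T \<in> Th" for T using C3 that card.infinite by fastforce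
  have finV: "finite (\<Union>Th)" using finTh finT by blast
  have EC_ok: "\<forall>e\<in>EC. \<exists>a' b' T'. e = {a',b'} \<and> a' \<noteq> b' \<and> T' \<in> Th \<and> e \<subseteq> T'"
  proof
    fix e assume "e \<in> EC"
    then obtain T' where T': "T' \<in> Th" "e \<subseteq> T'" "card e = 2"
      using edgesC(1) unfolding mesh_edges_def by blast
    then obtain a' b' where "e = {a',b'}" "a' \<noteq> b'" by (auto simp: card_2_iff)
    thus "\<exists>a' b' T'. e = {a',b'} \<and> a' \<noteq> b' \<and> T' \<in> Th \<and> e \<subseteq> T'" using T' by blast
  qed
  have EC_sub: "\<Union>EC \<subseteq> \<Union>Th" using edgesC(1) unfolding mesh_edges_def by blast
  have finEC: "finite EC"
    by (rule finite_subset[of _ "Pow (\<Union>Th)"]) (use EC_sub finV in auto)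
  have finVC: "finite VC" unfolding VC_def mesh_vertices_def using finV by simp
  have "MC \<subseteq> (\<lambda>(a,b). midpoint a b) ` (\<Union>EC \<times> \<Union>EC)"
    unfolding MC_def edge_midpoints_def by (auto simp: image_iff)
  hence finMC: "finite MC"
    by (rule finite_subset) (use finV EC_sub finite_subset in \<open>blast intro: finite_cartesian_product\<close>)
  have finCN: "finite CN" unfolding CN_def using finVC finMC by simp
  have GCcl: "closure GC \<subseteq> frontier \<Omega>" using GC_sep by blast
  obtain U where U: "open U" "GC = frontier \<Omega> \<inter> U"
    using parts_open(3) unfolding openin_open by blast
  have nodes: "a \<in> VC \<and> b \<in> VC \<and> midpoint a b \<in> MC" if ab_in: "{a,b} \<in> EC" for a b
  proof -
    obtain a' b' T' where T': "{a,b} = {a',b'}" "a' \<noteq> b'" "T' \<in> Th" "{a,b} \<subseteq> T'"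
      using bspec[OF EC_ok ab_in] by meson
    have ab: "a \<noteq> b" using T'(1,2) by (auto simp: doubleton_eq_iff)
    have "a \<in> \<Union>Th" "b \<in> \<Union>Th" using T' by auto
    moreover have "a \<in> closure GC" "b \<in> closure GC"
      using seg_in_edge_union[OF that] edgesC(2) ends_in_segment[of a b] by auto
    moreover have "midpoint a b \<in> MC" unfolding MC_def edge_midpoints_def using that ab by blast
    ultimately show ?thesis unfolding VC_def mesh_vertices_def by auto
  qed
  have MC_Mn: "MC \<subseteq> Mn" unfolding MC_def Mn_def mesh_midpoints_def edge_midpoints_def
      using edgesC(1) by blast
  have CN_nodes: "CN \<subseteq> Vn \<union> Mn"
  proof -
    have "VC \<subseteq> Vn" unfolding VC_def Vn_def by blast
    thus ?thesis using MC_Mn unfolding CN_def by blast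
  qed
  have phi: "\<phi> z \<in> Qh_scalar EC GC \<and> (\<forall>q\<in>CN. \<phi> z q = (if q = z then 1 else 0))" if "z \<in> CN" for z
    using phi_basis that unfolding CN_def by blast
  have phi01: "\<phi> z q \<in> {0,1}" if "z \<in> CN" "q \<in> CN" for z q
    using phi[OF that(1)] that(2) by auto
  have phi_bnd: "0 \<le> \<phi> z x \<and> \<phi> z x \<le> 1" if "z \<in> CN" "{a,b} \<in> EC" "x \<in> closed_segment a b" for z a b x
    using phi_bounds[OF conjunct1[OF phi[OF that(1)]] that(2) _ _ _ that(3)] phi01[OF that(1)]
      nodes[OF that(2)] unfolding CN_def by blast
  have Wpos: "bdry_integral EC (frontier (patch Th p) \<inter> GC) (\<phi> p) > 0" if pCN: "p \<in> CN" for p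
  proof -
    have fromA: "\<exists>a b T. {a,b} \<in> EC \<and> a \<noteq> b \<and> T \<in> Th \<and> {a,b} \<subseteq> T \<and> p \<in> convex hull T \<and>
            ((\<phi> p a = 1 \<and> \<phi> p (midpoint a b) = 0) \<or> (\<phi> p a = 0 \<and> \<phi> p (midpoint a b) = 1))"
      if A: "{a,b} \<in> EC" "a \<noteq> b" "T \<in> Th" "{a,b} \<subseteq> T" "p = a" for a b T
    proof -
      have "midpoint a b \<in> CN" using nodes[OF A(1)] unfolding CN_def by blast
      moreover have "midpoint a b \<noteq> p" using A(2,5) by simp
      ultimately have "\<phi> p (midpoint a b) = 0" using phi[OF pCN] by auto
      moreover have "\<phi> p a = 1" using phi[OF pCN] pCN A(5) by auto
      moreover have "p \<in> convex hull T" using A(4,5) by (intro hull_inc) simp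
      ultimately show ?thesis using A by blast
    qed
    have "\<exists>a b T. {a,b} \<in> EC \<and> a \<noteq> b \<and> T \<in> Th \<and> {a,b} \<subseteq> T \<and> p \<in> convex hull T \<and>
            ((\<phi> p a = 1 \<and> \<phi> p (midpoint a b) = 0) \<or> (\<phi> p a = 0 \<and> \<phi> p (midpoint a b) = 1))"
    proof (cases "p \<in> VC")
      case True
      hence pGC: "p \<in> closure GC" and pV: "p \<in> \<Union>Th" unfolding VC_def mesh_vertices_def by auto
      from pGC obtain a0 b0 where ab0: "{a0,b0} \<in> EC" "p \<in> closed_segment a0 b0"
        unfolding edgesC(2) edge_union_def by blast
      obtain a' b' T where T: "{a0,b0} = {a',b'}" "a' \<noteq> b'" "T \<in> Th" "{a0,b0} \<subseteq> T"
        using bspec[OF EC_ok ab0(1)] by meson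
      have ab0ne: "a0 \<noteq> b0" using T(1,2) by (auto simp: doubleton_eq_iff)
      obtain T'' where T'': "T'' \<in> Th" "p \<in> T''" using pV by blast
      have "p = a0 \<or> p = b0"
      proof (rule ccontr)
        assume np: "\<not> (p = a0 \<or> p = b0)"
        hence po: "p \<in> open_segment a0 b0" using ab0(2) by (auto simp: open_segment_def)
        have "p \<in> convex hull T''" by (rule hull_inc[OF T''(2)])
        hence sub: "{a0,b0} \<subseteq> T''" using G[OF normal_C CF C3 ab0(1) ab0ne T(3) T(4) po T''(1)] by simp
        have nc: "(\<forall>x\<in>{a0,b0}. \<forall>y\<in>{a0,b0}. x $ 1 = y $ 1) \<and> (\<forall>x\<in>{a0,b0}. \<forall>c\<in>T'' - {a0,b0}. c $ 1 < x $ 1)"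
          using bspec[OF bspec[OF normal_C ab0(1)] T''(1)] sub by (rule mp)
        have pd: "p \<in> T'' - {a0,b0}" using T''(2) np by simp
        have a0in: "a0 \<in> {a0,b0}" by simp
        have b0in: "b0 \<in> {a0,b0}" by simp
        have lt: "p $ 1 < a0 $ 1" using bspec[OF bspec[OF conjunct2[OF nc] a0in] pd] .
        have "a0 $ 1 = b0 $ 1" using bspec[OF bspec[OF conjunct1[OF nc] a0in] b0in] .
        hence "p $ 1 = a0 $ 1" using seg_comp1[OF _ ab0(2)] by simp
        thus False using lt by simp
      qed
      thus ?thesis
      proof
        assume "p = a0" thus ?thesis using fromA[OF ab0(1) ab0ne T(3) T(4)] by simp
      next
        assume pb: "p = b0"
        have "{b0,a0} \<in> EC" "{b0,a0} \<subseteq> T" using ab0(1) T(4) by (auto simp: insert_commute)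
        thus ?thesis using fromA[of b0 a0 T] ab0ne T(3) pb by simp
      qed
    next
      case False
      hence "p \<in> MC" using pCN unfolding CN_def by simp
      then obtain a b where ab: "p = midpoint a b" "{a,b} \<in> EC" "a \<noteq> b"
        unfolding MC_def edge_midpoints_def by blast
      obtain a' b' T where T: "{a,b} = {a',b'}" "a' \<noteq> b'" "T \<in> Th" "{a,b} \<subseteq> T"
        using bspec[OF EC_ok ab(2)] by meson
      have "a \<in> CN" using nodes[OF ab(2)] unfolding CN_def by blast
      moreover have "a \<noteq> p" using ab(1,3) by (metis midpoint_eq_endpoint(1))
      ultimately have "\<phi> p a = 0" using phi[OF pCN] by auto
      moreover have "\<phi> p (midpoint a b) = 1" using phi[OF pCN] pCN ab(1) by auto
      moreover have "p \<in> convex hull T"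
      proof -
        have "p \<in> closed_segment a b" unfolding ab(1)
          using csegment_midpoint_subset[of a b] ends_in_segment[of "midpoint a b" b] by blast
        thus ?thesis using hull_mono[OF T(4)] by (auto simp: segment_convex_hull)
      qed
      ultimately show ?thesis using ab T by blast
    qed
    then obtain a b T where e: "{a,b} \<in> EC" "a \<noteq> b" "T \<in> Th" "{a,b} \<subseteq> T"
      and pT: "p \<in> convex hull T"
      and v: "(\<phi> p a = 1 \<and> \<phi> p (midpoint a b) = 0) \<or> (\<phi> p a = 0 \<and> \<phi> p (midpoint a b) = 1)"
      by blast
    define S where "S = frontier (patch Th p) \<inter> GC"
    define h where "h = (\<lambda>x. indicator S x * \<phi> p x)"
    have hnn: "\<forall>x\<in>closed_segment a' b'. 0 \<le> h x \<and> h x \<le> 1" if "{a',b'} \<in> EC" for a' b'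
      using phi_bnd[OF pCN that] unfolding h_def by (auto simp: indicator_def)
    have Sb: "S \<in> sets borel" unfolding S_def U(2) using U(1) by auto
    have phieq: "\<phi> p = (\<lambda>x. indicator (closure GC) x *\<^sub>R \<phi> p x)"
      using conjunct1[OF phi[OF pCN]] by (auto simp: Qh_scalar_def indicator_def fun_eq_iff)
    have "\<phi> p \<in> borel_measurable borel"
      apply (subst phieq)
      apply (rule borel_measurable_continuous_on_indicator)
      using conjunct1[OF phi[OF pCN]] by (auto simp: Qh_scalar_def)
    hence meas: "h \<in> borel_measurable borel" unfolding h_def using Sb by measurable
    obtain c d where cd: "1/16 \<le> c" "c < d" "d \<le> 7/16" and cdGC: "\<forall>t\<in>{c<..<d}. a + t *\<^sub>R (b-a) \<in> GC"
      using GCI[OF normal_C CF C3 finEC EC_ok edgesC(2) U(2) U(1) GCcl e] by blast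
    have low: "\<forall>t\<in>{c<..<d}. 1/8 \<le> h (a + t *\<^sub>R (b - a))"
    proof
      fix t assume t: "t \<in> {c<..<d}"
      have "a + t *\<^sub>R (b - a) \<in> open_segment a b"
        unfolding in_segment using e(2) t cd by (auto intro!: exI[of _ t] simp: algebra_simps)
      hence "a + t *\<^sub>R (b - a) \<in> frontier (patch Th p)"
        using PF[OF normal_C CF C3 finTh e _ pT] by blast
      hence "a + t *\<^sub>R (b - a) \<in> S" using cdGC t unfolding S_def by blast
      moreover have "1/8 \<le> \<phi> p (a + t *\<^sub>R (b - a))"
        using phi_low[OF conjunct1[OF phi[OF pCN]] e(1) v] t cd by auto
      ultimately show "1/8 \<le> h (a + t *\<^sub>R (b - a))" unfolding h_def by simp
    qed
    have pos: "seg_integral h {a,b} > 0"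
      by (rule seg_integral_pos[OF e(2) meas hnn[OF e(1)] _ cd(2) _ _ low]) (use cd in auto)
    have nn: "0 \<le> seg_integral h e'" if e_in: "e' \<in> EC" for e'
    proof -
      obtain a' b' T' where "e' = {a',b'}" "a' \<noteq> b'" "T' \<in> Th" "e' \<subseteq> T'" using bspec[OF EC_ok e_in] by (elim exE conjE) (rule that; assumption)
      thus ?thesis using seg_integral_nonneg[of a' b' h] hnn e_in by auto
    qed
    have "seg_integral h {a,b} \<le> (\<Sum>e'\<in>EC. seg_integral h e')"
      by (rule member_le_sum[OF e(1)]) (use nn finEC in auto)
    thus ?thesis using pos unfolding bdry_integral_def h_def S_def by simp
  qed
  have lam_def': "\<forall>v\<in>Qh EC GC. ip_h Th EC GC CN \<phi> lam v
                    = lin_L \<Omega> f EN GN g (pi_h CN \<psi> v) - bil_a chi \<mu> \<Omega> uh (pi_h CN \<psi> v)"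
    using lam_def unfolding CN_def .
  have uh_VI': "\<forall>v\<in>Kh Th \<Omega> GD CN.
                  bil_a chi \<mu> \<Omega> uh (\<lambda>x. v x - uh x) \<ge> lin_L \<Omega> f EN GN g (\<lambda>x. v x - uh x)"
    using uh_VI unfolding CN_def .
  have uhV: "uh \<in> Vh Th \<Omega> GD" using uh_K unfolding Kh_def by blast
  have pnode: "p \<in> (Vn - VD) \<union> (Mn - MD)" if pCN: "p \<in> CN" for p
  proof (cases "p \<in> VC")
    case True
    hence "p \<in> Vn" "p \<in> closure GC" unfolding VC_def Vn_def by auto
    hence "p \<notin> VD" using GC_sep unfolding VD_def by blast
    thus ?thesis using \<open>p \<in> Vn\<close> by blast
  next
    case False
    hence pM: "p \<in> MC" using pCN unfolding CN_def by simp
    hence "p \<in> Mn" using MC_Mn by blast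
    from pM obtain a b where ab: "p = midpoint a b" "{a,b} \<in> EC"
      unfolding MC_def edge_midpoints_def by blast
    have mid_in: "midpoint x y \<in> closed_segment x y" for x y :: pt
      using csegment_midpoint_subset[of x y] ends_in_segment[of "midpoint x y" y] by blast
    have "p \<in> closure GC" using ab mid_in seg_in_edge_union[OF ab(2)] edgesC(2) by auto
    moreover have "MD \<subseteq> closure GD"
    proof
      fix q assume "q \<in> MD"
      then obtain x y where "q = midpoint x y" "{x,y} \<in> ED" unfolding MD_def edge_midpoints_def by blast
      thus "q \<in> closure GD" using mid_in seg_in_edge_union edgesD(2) by blast
    qed
    ultimately have "p \<notin> MD" using GC_sep by blast
    thus ?thesis using \<open>p \<in> Mn\<close> by blast
  qed
  have key: "c * (lam p $ k) \<le> 0"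
    if pCN: "p \<in> CN" and ck: "k = 2 \<or> c = -1" and c01: "c = 1 \<or> c = -1" for p c and k :: 2
  proof -
    define W where "W = bdry_integral EC (frontier (patch Th p) \<inter> GC) (\<phi> p)"
    have Wp: "W > 0" unfolding W_def by (rule Wpos[OF pCN])
    have psip: "\<psi> p \<in> Vh_scalar Th \<Omega> GD" and psid: "\<forall>q\<in>Vn \<union> Mn. \<psi> p q = (if q = p then 1 else 0)"
      using bspec[OF psi_basis pnode[OF pCN]] by simp_all
    have phip: "\<phi> p \<in> Qh_scalar EC GC" using phi[OF pCN] by blast
    define V where "V = (\<lambda>x. (c * \<phi> p x) *\<^sub>R (axis k 1 :: pt))"
    define v where "v = (\<lambda>x. uh x + (c * \<psi> p x) *\<^sub>R (axis k 1 :: pt))"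
    have VQ: "V \<in> Qh EC GC"
    proof -
      have "continuous_on (closure GC) V"
        using phip unfolding V_def Qh_scalar_def by (auto intro!: continuous_intros)
      moreover have "\<forall>H\<in>half_edges EC. \<forall>i. P1_on H (\<lambda>x. V x $ i)"
      proof (intro ballI allI)
        fix H i assume "H \<in> half_edges EC"
        hence "P1_on H (\<phi> p)" using phip by (auto simp: Qh_scalar_def)
        hence "P1_on H (\<lambda>x. (c * axis k 1 $ i) * \<phi> p x)" by (rule P1_scale)
        moreover have "(\<lambda>x. V x $ i) = (\<lambda>x. (c * axis k 1 $ i) * \<phi> p x)"
          by (auto simp: V_def fun_eq_iff)
        ultimately show "P1_on H (\<lambda>x. V x $ i)" by simp
      qed
      moreover have "\<forall>x. x \<notin> closure GC \<longrightarrow> V x = 0"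
        using phip by (auto simp: V_def Qh_scalar_def)
      ultimately show ?thesis unfolding Qh_def by blast
    qed
    have vK: "v \<in> Kh Th \<Omega> GD CN"
    proof -
      have "continuous_on (closure \<Omega>) v"
        using psip uhV unfolding v_def Vh_scalar_def Vh_def by (auto intro!: continuous_intros)
      moreover have "\<forall>T\<in>Th. \<forall>i. P2_on (convex hull T) (\<lambda>x. v x $ i)"
      proof (intro ballI allI)
        fix T i assume T: "T \<in> Th"
        have "P2_on (convex hull T) (\<lambda>x. uh x $ i)" using uhV T unfolding Vh_def by blast
        moreover have "P2_on (convex hull T) (\<psi> p)" using psip T unfolding Vh_scalar_def by blast
        ultimately have "P2_on (convex hull T) (\<lambda>x. uh x $ i + (c * axis k 1 $ i) * \<psi> p x)"
          by (rule P2_lin)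
        moreover have "(\<lambda>x. v x $ i) = (\<lambda>x. uh x $ i + (c * axis k 1 $ i) * \<psi> p x)"
          by (auto simp: v_def fun_eq_iff)
        ultimately show "P2_on (convex hull T) (\<lambda>x. v x $ i)" by simp
      qed
      moreover have "\<forall>x\<in>closure GD. v x = 0"
        using psip uhV unfolding v_def Vh_scalar_def Vh_def by auto
      moreover have "\<forall>z\<in>CN. v z $ 1 \<le> 0"
      proof
        fix z assume zCN: "z \<in> CN"
        have "uh z $ 1 \<le> 0" using uh_K zCN unfolding Kh_def CN_def by blast
        moreover have "c * \<psi> p z * (axis k 1 $ 1) \<le> 0"
        proof (cases "k = 2")
          case True thus ?thesis by (simp add: axis_def)
        next
          case False
          hence "c = -1" using ck by simp
          moreover have "\<psi> p z \<ge> 0" using psid CN_nodes zCN by auto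
          moreover have "axis k 1 $ 1 \<ge> (0::real)" by (simp add: axis_def)
          ultimately show ?thesis by simp
        qed
        ultimately show "v z $ 1 \<le> 0" by (simp add: v_def)
      qed
      ultimately show ?thesis unfolding Kh_def Vh_def by blast
    qed
    have psum: "pi_h CN \<psi> V = (\<lambda>x. v x - uh x)"
    proof
      fix x
      have inner: "(\<Sum>i\<in>UNIV. (V z $ i * \<psi> z x) *\<^sub>R axis i (1::real)) = \<psi> z x *\<^sub>R V z" for z
        using axis_expand[of "\<psi> z x" "V z"] by (simp add: mult.commute)
      have "pi_h CN \<psi> V x = (\<Sum>z\<in>CN. \<psi> z x *\<^sub>R V z)" unfolding pi_h_def inner ..
      also have "\<dots> = (\<Sum>z\<in>CN. if z = p then (c * \<psi> p x) *\<^sub>R (axis k 1 :: pt) else 0)"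
      proof (rule sum.cong[OF refl])
        fix z assume "z \<in> CN"
        thus "\<psi> z x *\<^sub>R V z = (if z = p then (c * \<psi> p x) *\<^sub>R (axis k 1 :: pt) else 0)"
          using phi[OF pCN] by (auto simp: V_def)
      qed
      also have "\<dots> = (c * \<psi> p x) *\<^sub>R axis k 1" using finCN pCN by simp
      also have "\<dots> = v x - uh x" by (simp add: v_def)
      finally show "pi_h CN \<psi> V x = v x - uh x" .
    qed
    have ip: "ip_h Th EC GC CN \<phi> lam V = c * (lam p $ k) * W"
    proof -
      have "ip_h Th EC GC CN \<phi> lam V = (\<Sum>z\<in>CN. if z = p then c * (lam p $ k) * W else 0)"
        unfolding ip_h_def
      proof (rule sum.cong[OF refl])
        fix z assume "z \<in> CN"
        thus "(lam z \<bullet> V z) * bdry_integral EC (frontier (patch Th z) \<inter> GC) (\<phi> z) =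
              (if z = p then c * (lam p $ k) * W else 0)"
          using phi[OF pCN] by (auto simp: V_def W_def inner_axis)
      qed
      also have "\<dots> = c * (lam p $ k) * W" using finCN pCN by simp
      finally show ?thesis .
    qed
    have "c * (lam p $ k) * W \<le> 0"
      using lam_def'[rule_format, OF VQ] uh_VI'[rule_format, OF vK] ip psum by simp
    thus ?thesis using Wp by (simp add: mult_le_0_iff)
  qed
  show ?thesis
  proof
    fix p assume "p \<in> VC \<union> MC"
    hence pCN: "p \<in> CN" unfolding CN_def .
    have c1: "(2::2) = 2 \<or> (1::real) = -1" "(1::real) = 1 \<or> (1::real) = -1" by simp_all
    have c2: "(1::2) = 2 \<or> (-1::real) = -1" "(-1::real) = 1 \<or> (-1::real) = -1" by simp_all
    have c3: "(2::2) = 2 \<or> (-1::real) = -1" by simp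
    have A: "(-1) * (lam p $ 1) \<le> 0" by (rule key[OF pCN c2])
    have B: "(-1) * (lam p $ 2) \<le> 0" by (rule key[OF pCN c3 c2(2)])
    have C: "1 * (lam p $ 2) \<le> 0" by (rule key[OF pCN c1])
    show "0 \<le> lam p $ 1 \<and> lam p $ 2 = 0" using A B C by linarith
  qed
qed


end
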